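(* Let $\succ=(\succ_s)_{s\in S}$ be a priority profile in which every $\succ_s$ is acyclic, and let $C:S\rightrightarrows I\times I$ be any correspondence. Then there exists a matching that is partially stable for $(\succ,C)$.
   Context: A binary relation $B$ on $X$ is asymmetric if $(x,y)\in B$ implies $(y,x)\notin B$; acyclic if for all $K\ge2$ and $x_0,\dots,x_K\in X$, [$(x_{k-1},x_k)\in B$ and $(x_k,x_{k-1})\notin B$ for all $k$] implies $(x_K,x_0)\notin B$. School choice setup: $I$ finite set of students ($|I|\ge 3$), $S$ finite set of schools; each student $i$ has a total order $P_i$ on $S\cup\{\emptyset\}$ ($sR_is'$ means $sP_is'$ or $s=s'$); each school $s$ has capacity $q_s\in\mathbb{Z}_{++}$ and an asymmetric priority relation $\succ_s$ on $I$. A matching $\mu$ assigns each $i$ to $\mu(i)\in S\cup\{\emptyset\}$ with $|\mu(s)|\le q_s$, $\mu(s)=\{i:\mu(i)=s\}$. $\mu$ is individually rational if $\mu(i)R_i\emptyset$ for all $i$, non-wasteful if $sP_i\mu(i)$ implies $|\mu(s)|=q_s$. $C(s)\subseteq I\times I$ lists pairs $(i,j)$ whose priority at $s$ may be violated. A matching $\mu$ is partially stable for $(\succ,C)$ if it is individually rational, non-wasteful, and for all $i,j\in I$ and $s\in S$: if $\mu(j)=s$, $sP_i\mu(i)$ and $(i,j)\in\succ_s$, then $(i,j)\in C(s)$. *)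

theory Defs
  imports Main
begin

text \<open>Schools have type 's, students type 'i. The outside option (being unmatched,
  written as the empty set in the paper) is None; school s is Some s.\<close>

definition outcomes :: "'s set \<Rightarrow> 's option set" where
  "outcomes S = insert None (Some ` S)"

definition acyclic_rel_on :: "'a set \<Rightarrow> ('a \<times> 'a) set \<Rightarrow> bool" where
  "acyclic_rel_on X B \<longleftrightarrow>
     (\<forall>K::nat. \<forall>x::nat \<Rightarrow> 'a. K \<ge> 2 \<longrightarrow> (\<forall>k\<le>K. x k \<in> X) \<longrightarrow>
        (\<forall>k\<in>{1..K}. (x (k - 1), x k) \<in> B \<and> (x k, x (k - 1)) \<notin> B) \<longrightarrow>
        (x K, x 0) \<notin> B)"

definition school_choice_problem ::
  "'i set \<Rightarrow> 's set \<Rightarrow> ('i \<Rightarrow> ('s option \<times> 's option) set) \<Rightarrow> ('s \<Rightarrow> nat)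
    \<Rightarrow> ('s \<Rightarrow> ('i \<times> 'i) set) \<Rightarrow> bool" where
  "school_choice_problem I S P q pr \<longleftrightarrow>
     finite I \<and> card I \<ge> 3 \<and> finite S \<and>
     (\<forall>i\<in>I. strict_linear_order_on (outcomes S) (P i) \<and> P i \<subseteq> outcomes S \<times> outcomes S) \<and>
     (\<forall>s\<in>S. q s > 0) \<and>
     (\<forall>s\<in>S. pr s \<subseteq> I \<times> I \<and> asym (pr s))"

definition assigned :: "'i set \<Rightarrow> ('i \<Rightarrow> 's option) \<Rightarrow> 's \<Rightarrow> 'i set" where
  "assigned I \<mu> s = {i \<in> I. \<mu> i = Some s}"

definition is_matching :: "'i set \<Rightarrow> 's set \<Rightarrow> ('s \<Rightarrow> nat) \<Rightarrow> ('i \<Rightarrow> 's option) \<Rightarrow> bool" where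
  "is_matching I S q \<mu> \<longleftrightarrow>
     (\<forall>i\<in>I. \<mu> i \<in> outcomes S) \<and> (\<forall>s\<in>S. card (assigned I \<mu> s) \<le> q s)"

definition individually_rational ::
  "'i set \<Rightarrow> ('i \<Rightarrow> ('s option \<times> 's option) set) \<Rightarrow> ('i \<Rightarrow> 's option) \<Rightarrow> bool" where
  "individually_rational I P \<mu> \<longleftrightarrow> (\<forall>i\<in>I. (\<mu> i, None) \<in> P i \<or> \<mu> i = None)"

definition non_wasteful ::
  "'i set \<Rightarrow> 's set \<Rightarrow> ('i \<Rightarrow> ('s option \<times> 's option) set) \<Rightarrow> ('s \<Rightarrow> nat)
     \<Rightarrow> ('i \<Rightarrow> 's option) \<Rightarrow> bool" where
  "non_wasteful I S P q \<mu> \<longleftrightarrow>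
     (\<forall>i\<in>I. \<forall>s\<in>S. (Some s, \<mu> i) \<in> P i \<longrightarrow> card (assigned I \<mu> s) = q s)"

definition partially_stable ::
  "'i set \<Rightarrow> 's set \<Rightarrow> ('i \<Rightarrow> ('s option \<times> 's option) set) \<Rightarrow> ('s \<Rightarrow> nat)
     \<Rightarrow> ('s \<Rightarrow> ('i \<times> 'i) set) \<Rightarrow> ('s \<Rightarrow> ('i \<times> 'i) set) \<Rightarrow> ('i \<Rightarrow> 's option) \<Rightarrow> bool" where
  "partially_stable I S P q pr C \<mu> \<longleftrightarrow>
     is_matching I S q \<mu> \<and> individually_rational I P \<mu> \<and> non_wasteful I S P q \<mu> \<and>
     (\<forall>i\<in>I. \<forall>j\<in>I. \<forall>s\<in>S.
        \<mu> j = Some s \<longrightarrow> (Some s, \<mu> i) \<in> P i \<longrightarrow> (i, j) \<in> pr s \<longrightarrow> (i, j) \<in> C s)"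

end

theory Submission
  imports Defs
begin

lemma acyc_no_cycle:
  assumes acy: "acyclic_rel_on I B" and as: "asym B" and sub: "B \<subseteq> I \<times> I"
  shows "(x, x) \<notin> B\<^sup>+"
proof
  assume "(x, x) \<in> B\<^sup>+"
  then obtain n where n: "n > 0" "(x, x) \<in> B ^^ n" by (auto simp: trancl_power)
  then obtain f where f: "f 0 = x" "f n = x" "\<forall>i<n. (f i, f (Suc i)) \<in> B"
    by (auto simp: relpow_fun_conv)
  have asy: "(a,b) \<in> B \<Longrightarrow> (b,a) \<notin> B" for a b using as by (meson asymD)
  consider "n = 1" | "n = 2" | "n \<ge> 3" using n by linarith
  then show False
  proof cases
    case 1 then show ?thesis using f asy[of x x] by auto
  next
    case 2
    have "(f 0, f (Suc 0)) \<in> B" "(f (Suc 0), f (Suc (Suc 0))) \<in> B" using f 2 by auto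
    moreover have "f (Suc (Suc 0)) = f 0" using f 2 by (simp add: numeral_2_eq_2)
    ultimately show ?thesis using asy by metis
  next
    case 3
    define K where "K = n - 1"
    have K: "K \<ge> 2" "Suc K = n" using 3 by (auto simp: K_def)
    have inI: "\<forall>k\<le>K. f k \<in> I"
    proof (intro allI impI)
      fix k assume "k \<le> K"
      then have "(f k, f (Suc k)) \<in> B" using f K by auto
      then show "f k \<in> I" using sub by auto
    qed
    have edges: "\<forall>k\<in>{1..K}. (f (k - 1), f k) \<in> B \<and> (f k, f (k - 1)) \<notin> B"
    proof
      fix k assume "k \<in> {1..K}"
      then have "k - 1 < n" using K by auto
      then have "(f (k-1), f (Suc (k-1))) \<in> B" using f(3) by blast
      moreover have "Suc (k-1) = k" using \<open>k \<in> {1..K}\<close> by auto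
      ultimately show "(f (k - 1), f k) \<in> B \<and> (f k, f (k - 1)) \<notin> B" using asy by auto
    qed
    have "(f K, f 0) \<in> B" using f K by (metis lessI)
    then show ?thesis using acy K inI edges unfolding acyclic_rel_on_def by blast
  qed
qed

lemma rank_exists:
  assumes fin: "finite I" and sub: "B \<subseteq> I \<times> I" and nc: "\<And>x. (x, x) \<notin> B\<^sup>+"
  shows "\<exists>r::'a \<Rightarrow> nat. inj_on r I \<and> (\<forall>i j. (i,j) \<in> B \<longrightarrow> r i < r j)"
proof -
  obtain g n where g: "g ` I = {i::nat. i < n}" "inj_on g I"
    using finite_imp_inj_to_nat_seg[OF fin] by blast
  define h where "h i = card {j\<in>I. (j,i) \<in> B\<^sup>+}" for i
  define r where "r i = h i * n + g i" for i
  have gl: "i \<in> I \<Longrightarrow> g i < n" for i using g by auto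
  have "inj_on r I"
  proof (rule inj_onI)
    fix a b assume ab: "a \<in> I" "b \<in> I" "r a = r b"
    have "r a mod n = g a" unfolding r_def using gl[OF ab(1)] by simp
    have "r b mod n = g b" unfolding r_def using gl[OF ab(2)] by simp
    then have "g a = g b" using ab(3) \<open>r a mod n = g a\<close> by metis
    then show "a = b" using g ab by (auto dest: inj_onD)
  qed
  moreover have "r i < r j" if ij: "(i,j) \<in> B" for i j
  proof -
    have ij': "i \<in> I" "j \<in> I" using ij sub by auto
    have "{k\<in>I. (k,i) \<in> B\<^sup>+} \<subset> {k\<in>I. (k,j) \<in> B\<^sup>+}"
    proof
      show "{k\<in>I. (k,i) \<in> B\<^sup>+} \<subseteq> {k\<in>I. (k,j) \<in> B\<^sup>+}" using ij by auto
      have "i \<in> {k\<in>I. (k,j) \<in> B\<^sup>+}" "i \<notin> {k\<in>I. (k,i) \<in> B\<^sup>+}" using ij ij' nc by auto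
      then show "{k\<in>I. (k,i) \<in> B\<^sup>+} \<noteq> {k\<in>I. (k,j) \<in> B\<^sup>+}" by blast
    qed
    then have "h i < h j" unfolding h_def using fin by (intro psubset_card_mono) auto
    then have "(h i + 1) * n \<le> h j * n" by (intro mult_right_mono) auto
    then show ?thesis using gl[OF ij'(1)] by (auto simp: r_def)
  qed
  ultimately show ?thesis by blast
qed

lemma count_lemma:
  fixes r :: "'a \<Rightarrow> nat"
  assumes fin: "finite J" and inj: "inj_on r J"
  defines "cnt \<equiv> \<lambda>j. card {k\<in>J. r k < r j}"
  shows "card {j\<in>J. cnt j < q} = min q (card J)"
    and "i \<in> J \<Longrightarrow> j \<in> J \<Longrightarrow> r i < r j \<Longrightarrow> cnt i < cnt j"
proof -
  show lt: "cnt i < cnt j" if "i \<in> J" "j \<in> J" "r i < r j" for i j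
  proof -
    have "{k\<in>J. r k < r i} \<subset> {k\<in>J. r k < r j}" using that by auto
    then show ?thesis unfolding cnt_def using fin by (intro psubset_card_mono) auto
  qed
  have injc: "inj_on cnt J"
  proof (rule inj_onI)
    fix a b assume ab: "a \<in> J" "b \<in> J" "cnt a = cnt b"
    show "a = b"
    proof (rule ccontr)
      assume "a \<noteq> b"
      then have "r a \<noteq> r b" using inj ab by (auto dest: inj_onD)
      then show False using lt[of a b] lt[of b a] ab by linarith
    qed
  qed
  have sub: "cnt ` J \<subseteq> {..<card J}"
  proof
    fix x assume "x \<in> cnt ` J"
    then obtain j where j: "j \<in> J" "x = cnt j" by auto
    have "{k\<in>J. r k < r j} \<subset> J" using j by auto
    then show "x \<in> {..<card J}" using j fin unfolding cnt_def by (auto intro: psubset_card_mono)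
  qed
  have img: "cnt ` J = {..<card J}"
    using sub by (intro card_subset_eq) (auto simp: card_image[OF injc])
  have "card {j\<in>J. cnt j < q} = card (cnt ` {j\<in>J. cnt j < q})"
    using injc by (intro card_image[symmetric]) (auto intro: inj_on_subset)
  also have "cnt ` {j\<in>J. cnt j < q} = {x\<in>cnt ` J. x < q}" by auto
  also have "\<dots> = {..<min q (card J)}" using img by auto
  finally show "card {j\<in>J. cnt j < q} = min q (card J)" by simp
qed

lemma best_exists:
  assumes "finite T" "T \<noteq> {}" "trans R" "\<forall>a\<in>T. \<forall>b\<in>T. a \<noteq> b \<longrightarrow> (f a, f b) \<in> R \<or> (f b, f a) \<in> R"
  shows "\<exists>t\<in>T. \<forall>t'\<in>T. t' = t \<or> (f t, f t') \<in> R"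
  using assms
proof (induction T rule: finite_ne_induct)
  case (singleton x) then show ?case by auto
next
  case (insert x F)
  then obtain t where t: "t \<in> F" "\<forall>t'\<in>F. t' = t \<or> (f t, f t') \<in> R" by auto
  have "x \<noteq> t" using insert t by auto
  then consider "(f x, f t) \<in> R" | "(f t, f x) \<in> R" using insert.prems t by auto
  then show ?case
  proof cases
    case 1 then show ?thesis using t insert.prems(1) by (metis insert_iff transD)
  next
    case 2 then show ?thesis using t by auto
  qed
qed

theorem corollary7:
  fixes I :: "'i set" and S :: "'s set"
    and P :: "'i \<Rightarrow> ('s option \<times> 's option) set"
    and q :: "'s \<Rightarrow> nat"
    and pr :: "'s \<Rightarrow> ('i \<times> 'i) set"
    and C :: "'s \<Rightarrow> ('i \<times> 'i) set"
  assumes "school_choice_problem I S P q pr"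
    and "\<forall>s\<in>S. acyclic_rel_on I (pr s)"
  shows "\<exists>\<mu>. partially_stable I S P q pr C \<mu>"
proof -
  note scp = assms(1)[unfolded school_choice_problem_def]
  have finI: "finite I" and finS: "finite S" using scp by auto
  have Pi: "i \<in> I \<Longrightarrow> trans (P i) \<and> irrefl (P i) \<and> total_on (outcomes S) (P i)" for i
    using scp by (auto simp: strict_linear_order_on_def)
  have "\<forall>s\<in>S. \<exists>r::'i\<Rightarrow>nat. inj_on r I \<and> (\<forall>i j. (i,j) \<in> pr s \<longrightarrow> r i < r j)"
  proof
    fix s assume s: "s \<in> S"
    have sub: "pr s \<subseteq> I \<times> I" and as: "asym (pr s)" using scp s by auto
    show "\<exists>r::'i\<Rightarrow>nat. inj_on r I \<and> (\<forall>i j. (i,j) \<in> pr s \<longrightarrow> r i < r j)"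
    proof (rule rank_exists[OF finI sub])
      fix x show "(x, x) \<notin> (pr s)\<^sup>+" using acyc_no_cycle[OF _ as sub] assms(2) s by blast
    qed
  qed
  then obtain rk :: "'s \<Rightarrow> 'i \<Rightarrow> nat" where rk: "\<And>s. s \<in> S \<Longrightarrow> inj_on (rk s) I"
    "\<And>s i j. s \<in> S \<Longrightarrow> (i,j) \<in> pr s \<Longrightarrow> rk s i < rk s j"
    by (metis bchoice)
  define X where "X = {(i,s). i \<in> I \<and> s \<in> S \<and> (Some s, None) \<in> P i}"
  define chI where "chI Y = {(i,s)\<in>Y. \<forall>s'. (i,s') \<in> Y \<longrightarrow> s' = s \<or> (Some s, Some s') \<in> P i}" for Y
  define cS where "cS Y s i = card {k \<in> {j\<in>I. (j,s) \<in> Y}. rk s k < rk s i}" for Y s i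
  define chS where "chS Y = {(i,s)\<in>Y. cS Y s i < q s}" for Y
  define F where "F A = X - ((X - (A - chI A)) - chS (X - (A - chI A)))" for A
  have mI: "Y \<subseteq> Y' \<Longrightarrow> Y - chI Y \<subseteq> Y' - chI Y'" for Y Y'
    unfolding chI_def by blast
  have mS: "Y \<subseteq> Y' \<Longrightarrow> Y \<subseteq> X \<Longrightarrow> Y' \<subseteq> X \<Longrightarrow> Y - chS Y \<subseteq> Y' - chS Y'" for Y Y'
  proof
    fix p assume YY: "Y \<subseteq> Y'" "Y \<subseteq> X" "Y' \<subseteq> X" and p: "p \<in> Y - chS Y"
    obtain i s where [simp]: "p = (i,s)" by (cases p)
    have "cS Y s i \<le> cS Y' s i" unfolding cS_def using YY finI
      by (intro card_mono) auto
    then show "p \<in> Y' - chS Y'" using p YY unfolding chS_def by auto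
  qed
  have "mono F"
  proof (rule monoI)
    fix A A' :: "('i \<times> 's) set" assume "A \<subseteq> A'"
    then have "X - (A' - chI A') \<subseteq> X - (A - chI A)" using mI by blast
    then have "(X - (A' - chI A')) - chS (X - (A' - chI A')) \<subseteq> (X - (A - chI A)) - chS (X - (A - chI A))"
      using mS by blast
    then show "F A \<subseteq> F A'" unfolding F_def by blast
  qed
  define A where "A = lfp F"
  have AF: "A = F A" unfolding A_def using lfp_unfold[OF \<open>mono F\<close>] .
  define B where "B = X - (A - chI A)"
  have AX: "A \<subseteq> X" using AF unfolding F_def by blast
  have BX: "B \<subseteq> X" unfolding B_def by blast
  have chIA: "chI A = A \<inter> B" using AX unfolding B_def chI_def by blast
  have AB: "A = X - (B - chS B)" using AF unfolding F_def B_def by simp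
  have chSB: "chS B = A \<inter> B" using AB BX unfolding chS_def by blast
  have uniq: "(i,s) \<in> chI A \<Longrightarrow> (i,s') \<in> chI A \<Longrightarrow> s = s'" for i s s'
  proof (rule ccontr)
    assume a: "(i,s) \<in> chI A" "(i,s') \<in> chI A" "s \<noteq> s'"
    then have "i \<in> I" using AX unfolding chI_def X_def by auto
    then have "trans (P i)" "irrefl (P i)" using Pi by auto
    moreover have "(Some s, Some s') \<in> P i" "(Some s', Some s) \<in> P i" using a unfolding chI_def by auto
    ultimately show False by (meson irrefl_def transD)
  qed
  define \<mu> where "\<mu> i = (if \<exists>s. (i,s) \<in> chI A then Some (THE s. (i,s) \<in> chI A) else None)" for i
  have mu_iff: "\<mu> i = Some s \<longleftrightarrow> (i,s) \<in> chI A" for i s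
  proof
    assume "\<mu> i = Some s"
    then obtain s0 where s0: "(i,s0) \<in> chI A" "s = (THE s. (i,s) \<in> chI A)"
      unfolding \<mu>_def by (auto split: if_splits)
    then show "(i,s) \<in> chI A" using uniq by (metis theI)
  next
    assume "(i,s) \<in> chI A"
    then show "\<mu> i = Some s" unfolding \<mu>_def using uniq by (auto intro: the_equality)
  qed
  have best: "\<exists>s'. (i,s') \<in> chI A \<and> (s' = s \<or> (Some s', Some s) \<in> P i)"
    if i: "i \<in> I" and isA: "(i,s) \<in> A" for i s
  proof -
    define T where "T = {s. (i,s) \<in> A}"
    have "T \<subseteq> S" using AX unfolding T_def X_def by auto
    then have "finite T" using finS finite_subset by blast
    moreover have "T \<noteq> {}" using isA unfolding T_def by auto
    moreover have "trans (P i)" using Pi i by auto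
    moreover have "\<forall>a\<in>T. \<forall>b\<in>T. a \<noteq> b \<longrightarrow> (Some a, Some b) \<in> P i \<or> (Some b, Some a) \<in> P i"
      using Pi[OF i] \<open>T \<subseteq> S\<close> unfolding total_on_def outcomes_def by blast
    ultimately obtain t where t: "t \<in> T" "\<forall>t'\<in>T. t' = t \<or> (Some t, Some t') \<in> P i"
      using best_exists[of T "P i" Some] by blast
    then have "(i,t) \<in> chI A" unfolding chI_def T_def by auto
    moreover have "t = s \<or> (Some t, Some s) \<in> P i" using t isA unfolding T_def by auto
    ultimately show ?thesis by blast
  qed
  have blocked: "(i,s) \<in> B \<and> q s \<le> cS B s i"
    if i: "i \<in> I" and s: "s \<in> S" and pref: "(Some s, \<mu> i) \<in> P i" for i s
  proof -
    have tr: "trans (P i)" and ir: "irrefl (P i)" using Pi i by auto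
    have acc: "(Some s, None) \<in> P i"
    proof (cases "\<mu> i")
      case None then show ?thesis using pref by simp
    next
      case (Some s')
      then have "(i,s') \<in> X" using mu_iff AX unfolding chI_def by auto
      then have "(Some s', None) \<in> P i" unfolding X_def by auto
      with pref Some tr show ?thesis by (metis transD)
    qed
    then have iX: "(i,s) \<in> X" unfolding X_def using i s by auto
    have "(i,s) \<notin> A"
    proof
      assume "(i,s) \<in> A"
      then obtain s' where s': "(i,s') \<in> chI A" "s' = s \<or> (Some s', Some s) \<in> P i"
        using best i by blast
      then have "\<mu> i = Some s'" using mu_iff by auto
      then have "(Some s, Some s') \<in> P i" using pref by simp
      then show False using s' tr ir by (meson irrefl_def transD)
    qed
    then have "(i,s) \<in> B - chS B" using AB iX by blast
    then show ?thesis unfolding chS_def by auto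
  qed
  have assigned_eq: "assigned I \<mu> s = {j \<in> {j\<in>I. (j,s) \<in> B}. cS B s j < q s}" for s
  proof -
    have e: "(j,s) \<in> chS B \<longleftrightarrow> (j,s) \<in> B \<and> cS B s j < q s" for j by (simp add: chS_def)
    have "assigned I \<mu> s = {j\<in>I. (j,s) \<in> chS B}"
      unfolding assigned_def using mu_iff chIA chSB by auto
    then show ?thesis using e by auto
  qed
  have cardJ: "card (assigned I \<mu> s) = min (q s) (card {j\<in>I. (j,s) \<in> B})" if s: "s \<in> S" for s
    unfolding assigned_eq cS_def
    by (rule count_lemma(1)) (use finI rk(1)[OF s] in \<open>auto intro: inj_on_subset\<close>)
  have matching: "is_matching I S q \<mu>"
    unfolding is_matching_def
  proof (intro conjI ballI)
    fix i assume "i \<in> I"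
    show "\<mu> i \<in> outcomes S"
    proof (cases "\<mu> i")
      case None then show ?thesis by (simp add: outcomes_def)
    next
      case (Some s')
      then have "(i,s') \<in> X" using mu_iff AX unfolding chI_def by auto
      then show ?thesis using Some unfolding X_def outcomes_def by auto
    qed
  next
    fix s assume "s \<in> S" then show "card (assigned I \<mu> s) \<le> q s" using cardJ by simp
  qed
  have ir: "individually_rational I P \<mu>"
    unfolding individually_rational_def
  proof
    fix i assume "i \<in> I"
    show "(\<mu> i, None) \<in> P i \<or> \<mu> i = None"
    proof (cases "\<mu> i")
      case (Some s')
      then have "(i,s') \<in> X" using mu_iff AX unfolding chI_def by auto
      then show ?thesis using Some unfolding X_def by auto
    qed simp
  qed
  have full: "card (assigned I \<mu> s) = q s" and higher: "\<forall>j\<in>assigned I \<mu> s. rk s j < rk s i"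
    if i: "i \<in> I" and s: "s \<in> S" and pref: "(Some s, \<mu> i) \<in> P i" for i s
  proof -
    define J where "J = {j\<in>I. (j,s) \<in> B}"
    have bl: "i \<in> J" "q s \<le> card {k\<in>J. rk s k < rk s i}" using blocked[OF i s pref]
      using i unfolding J_def cS_def by auto
    have "finite J" using finI unfolding J_def by auto
    then have "card {k\<in>J. rk s k < rk s i} \<le> card J" by (intro card_mono) auto
    then show "card (assigned I \<mu> s) = q s" using cardJ[OF s] bl unfolding J_def by simp
    show "\<forall>j\<in>assigned I \<mu> s. rk s j < rk s i"
    proof
      fix j assume j: "j \<in> assigned I \<mu> s"
      then have jJ: "j \<in> J" and jc: "card {k\<in>J. rk s k < rk s j} < q s"
        unfolding assigned_eq J_def cS_def by auto
      have injJ: "inj_on (rk s) J" using rk(1)[OF s] unfolding J_def by (auto intro: inj_on_subset)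
      show "rk s j < rk s i"
      proof (rule ccontr)
        assume "\<not> rk s j < rk s i"
        moreover have "j \<noteq> i" using jc bl by auto
        ultimately have "rk s i < rk s j" using injJ jJ bl(1) by (metis inj_onD linorder_neqE_nat)
        then have "card {k\<in>J. rk s k < rk s i} < card {k\<in>J. rk s k < rk s j}"
          using count_lemma(2)[OF \<open>finite J\<close> injJ bl(1) jJ] by simp
        then show False using jc bl by simp
      qed
    qed
  qed
  have "partially_stable I S P q pr C \<mu>"
    unfolding partially_stable_def
  proof (intro conjI matching ir)
    show "non_wasteful I S P q \<mu>" unfolding non_wasteful_def using full by blast
    show "\<forall>i\<in>I. \<forall>j\<in>I. \<forall>s\<in>S. \<mu> j = Some s \<longrightarrow> (Some s, \<mu> i) \<in> P i \<longrightarrow> (i, j) \<in> pr s \<longrightarrow> (i, j) \<in> C s"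
    proof (intro ballI impI)
      fix i j s assume ij: "i \<in> I" "j \<in> I" "s \<in> S" "\<mu> j = Some s" "(Some s, \<mu> i) \<in> P i" "(i,j) \<in> pr s"
      have "j \<in> assigned I \<mu> s" using ij unfolding assigned_def by auto
      then have "rk s j < rk s i" using higher[OF ij(1,3,5)] by blast
      moreover have "rk s i < rk s j" using rk(2)[OF ij(3,6)] .
      ultimately show "(i,j) \<in> C s" by simp
    qed
  qed
  then show ?thesis by blast
qed

end
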